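(* Let $n\ge1$ and let $S=\{\mathbf{x}_0,\mathbf{x}_1,\ldots,\mathbf{x}_k\}$ be a set of distinct points of the Hamming cube $\{0,1\}^n\subset\ell_1^{(n)}$, equipped with the $\ell_1$ metric. Then $S$ has generalized roundness $\mathfrak{q}(S)=1$ if and only if the vectors $\mathbf{x}_1-\mathbf{x}_0,\mathbf{x}_2-\mathbf{x}_0,\ldots,\mathbf{x}_k-\mathbf{x}_0$ are linearly dependent in $\mathbb{R}^n$. Equivalently, $S$ has strict $1$-negative type if and only if these vectors are linearly independent in $\mathbb{R}^n$.
   Context: For $p\ge0$, a metric space $(X,d)$ has $p$-negative type if for all finite $\{x_1,\ldots,x_m\}\subseteq X$ ($m\ge2$) and all reals $\eta_1,\ldots,\eta_m$ with $\sum\eta_i=0$, $\sum_{i,j}d(x_i,x_j)^p\eta_i\eta_j\le 0$; it has strict $p$-negative type if moreover this inequality is strict whenever $(\eta_1,\ldots,\eta_m)\ne 0$. $p$ is a generalized roundness exponent if for all $m$ and all $a_1,\ldots,a_m,b_1,\ldots,b_m\in X$, $\sum_{k<l}\{d(a_k,a_l)^p+d(b_k,b_l)^p\}\le\sum_{j,i}d(a_j,b_i)^p$; the generalized roundness $\mathfrak{q}(X)$ is the supremum of all generalized roundness exponents. *)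

theory Defs
  imports "HOL-Analysis.Analysis"
begin

definition l1_dist :: "real ^ 'n \<Rightarrow> real ^ 'n \<Rightarrow> real" where
  "l1_dist x y = (\<Sum>i\<in>UNIV. \<bar>x $ i - y $ i\<bar>)"

definition hamming_cube :: "(real ^ 'n) set" where
  "hamming_cube = {x. \<forall>i. x $ i = 0 \<or> x $ i = 1}"

definition neg_type :: "('a \<Rightarrow> 'a \<Rightarrow> real) \<Rightarrow> 'a set \<Rightarrow> real \<Rightarrow> bool" where
  "neg_type d S p \<longleftrightarrow> p \<ge> 0 \<and>
     (\<forall>F \<eta>. F \<subseteq> S \<longrightarrow> finite F \<longrightarrow> card F \<ge> 2 \<longrightarrow> sum \<eta> F = 0 \<longrightarrow>
        (\<Sum>x\<in>F. \<Sum>y\<in>F. d x y powr p * \<eta> x * \<eta> y) \<le> 0)"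

definition strict_neg_type :: "('a \<Rightarrow> 'a \<Rightarrow> real) \<Rightarrow> 'a set \<Rightarrow> real \<Rightarrow> bool" where
  "strict_neg_type d S p \<longleftrightarrow> neg_type d S p \<and>
     (\<forall>F \<eta>. F \<subseteq> S \<longrightarrow> finite F \<longrightarrow> card F \<ge> 2 \<longrightarrow> sum \<eta> F = 0 \<longrightarrow>
        (\<exists>x\<in>F. \<eta> x \<noteq> 0) \<longrightarrow>
        (\<Sum>x\<in>F. \<Sum>y\<in>F. d x y powr p * \<eta> x * \<eta> y) < 0)"

definition gr_exponent :: "('a \<Rightarrow> 'a \<Rightarrow> real) \<Rightarrow> 'a set \<Rightarrow> real \<Rightarrow> bool" where
  "gr_exponent d S p \<longleftrightarrow> p \<ge> 0 \<and>
     (\<forall>m::nat. \<forall>a b. (\<forall>i<m. a i \<in> S \<and> b i \<in> S) \<longrightarrow>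
        (\<Sum>k<m. \<Sum>l\<in>{k<..<m}. d (a k) (a l) powr p + d (b k) (b l) powr p)
          \<le> (\<Sum>j<m. \<Sum>i<m. d (a j) (b i) powr p))"

text \<open>Generalized roundness, as an extended real (it may be infinite).\<close>
definition gen_roundness :: "('a \<Rightarrow> 'a \<Rightarrow> real) \<Rightarrow> 'a set \<Rightarrow> ereal" where
  "gen_roundness d S = Sup (ereal ` {p. gr_exponent d S p})"

end

theory Submission
  imports Defs
begin


definition quad :: "'a set \<Rightarrow> ('a \<Rightarrow> 'a \<Rightarrow> real) \<Rightarrow> ('a \<Rightarrow> real) \<Rightarrow> real" where
  "quad F K \<xi> = (\<Sum>u\<in>F. \<Sum>v\<in>F. \<xi> u * \<xi> v * K u v)"

definition psd :: "'a set \<Rightarrow> ('a \<Rightarrow> 'a \<Rightarrow> real) \<Rightarrow> bool" where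
  "psd F K \<longleftrightarrow> (\<forall>\<xi>. 0 \<le> quad F K \<xi>)"

lemma quad_cong:
  assumes "\<And>u. u \<in> F \<Longrightarrow> \<xi> u = \<zeta> u" "\<And>u v. u \<in> F \<Longrightarrow> v \<in> F \<Longrightarrow> K u v = L u v"
  shows "quad F K \<xi> = quad F L \<zeta>"
  unfolding quad_def using assms by (intro sum.cong refl) auto

lemma quad_insert:
  assumes "finite F" "b \<notin> F" "\<And>u v. u \<in> insert b F \<Longrightarrow> v \<in> insert b F \<Longrightarrow> K u v = K v u"
  shows "quad (insert b F) K \<xi> = \<xi> b * \<xi> b * K b b + 2 * \<xi> b * (\<Sum>v\<in>F. \<xi> v * K b v) + quad F K \<xi>"
proof -
  have s: "(\<Sum>u\<in>F. \<xi> u * \<xi> b * K u b) = (\<Sum>v\<in>F. \<xi> b * \<xi> v * K b v)"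
    using assms(3) by (intro sum.cong) (auto simp: mult_ac)
  have "quad (insert b F) K \<xi> = (\<Sum>v\<in>insert b F. \<xi> b * \<xi> v * K b v) + (\<Sum>u\<in>F. \<Sum>v\<in>insert b F. \<xi> u * \<xi> v * K u v)"
    using assms(1,2) unfolding quad_def by simp
  also have "\<dots> = \<xi> b * \<xi> b * K b b + (\<Sum>v\<in>F. \<xi> b * \<xi> v * K b v) + ((\<Sum>u\<in>F. \<xi> u * \<xi> b * K u b) + quad F K \<xi>)"
    using assms(1,2) unfolding quad_def by (simp add: sum.distrib)
  also have "\<dots> = \<xi> b * \<xi> b * K b b + 2 * \<xi> b * (\<Sum>v\<in>F. \<xi> v * K b v) + quad F K \<xi>"
    unfolding s by (simp add: sum_distrib_left mult_ac)
  finally show ?thesis .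
qed

lemma quad_diff_rank1:
  "quad F (\<lambda>u v. K u v - r u * r v) \<xi> = quad F K \<xi> - (\<Sum>u\<in>F. \<xi> u * r u)^2"
  unfolding quad_def power2_eq_square sum_product
  by (simp add: sum_subtractf algebra_simps)

lemma psd_gram:
  assumes "finite F" "psd F K" "\<And>u v. u \<in> F \<Longrightarrow> v \<in> F \<Longrightarrow> K u v = K v u"
  shows "\<exists>w. \<forall>u\<in>F. \<forall>v\<in>F. K u v = (\<Sum>a\<in>F. w u a * w v a)"
  using assms
proof (induction F arbitrary: K rule: finite_induct)
  case empty
  then show ?case by auto
next
  case (insert b F K)
  have qi: "quad (insert b F) K \<xi> = \<xi> b * \<xi> b * K b b + 2 * \<xi> b * (\<Sum>v\<in>F. \<xi> v * K b v) + quad F K \<xi>" for \<xi>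
    by (rule quad_insert) (use insert in auto)
  have Kbb: "K b b \<ge> 0"
  proof -
    have "0 \<le> quad (insert b F) K (\<lambda>u. if u = b then 1 else 0)"
      using insert.prems(1) unfolding psd_def by blast
    also have "\<dots> = K b b"
    proof -
      have z: "\<And>u. u \<in> F \<Longrightarrow> (if u = b then 1 else 0) = (0::real)" using insert.hyps by auto
      show ?thesis unfolding qi by (simp add: quad_def z cong: sum.cong)
    qed
    finally show ?thesis .
  qed
  show ?case
  proof (cases "K b b = 0")
    case True
    have Kb0: "K b v = 0" if v: "v \<in> F" for v
    proof (rule ccontr)
      assume ne: "K b v \<noteq> 0"
      define t where "t = - (K v v + 1) / (2 * K b v)"
      define \<xi> where "\<xi> = (\<lambda>u. if u = b then t else if u = v then 1 else (0::real))"
      have bv: "b \<noteq> v" using v insert.hyps by auto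
      have "0 \<le> quad (insert b F) K \<xi>" using insert.prems(1) unfolding psd_def by blast
      also have "\<dots> = 2 * t * K b v + K v v"
      proof -
        have x: "\<And>w. w \<in> F \<Longrightarrow> \<xi> w = (if w = v then 1 else 0)"
          using insert.hyps by (auto simp: \<xi>_def)
        have e1: "(\<Sum>w\<in>F. \<xi> w * K b w) = K b v"
        proof -
          have "(\<Sum>w\<in>F. \<xi> w * K b w) = (\<Sum>w\<in>F. if w = v then K b w else 0)"
            by (intro sum.cong) (auto simp: x)
          also have "\<dots> = K b v" using v insert.hyps(1) by (simp add: sum.delta')
          finally show ?thesis .
        qed
        have e2: "quad F K \<xi> = K v v"
        proof -
          have "quad F K \<xi> = (\<Sum>u\<in>F. if u = v then (\<Sum>w\<in>F. if w = v then K u w else 0) else 0)"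
            unfolding quad_def by (intro sum.cong) (auto simp: x intro!: sum.cong)
          also have "\<dots> = K v v" using v insert.hyps(1) by (simp add: sum.delta')
          finally show ?thesis .
        qed
        show ?thesis unfolding qi e1 e2 using True bv by (simp add: \<xi>_def)
      qed
      also have "\<dots> = -1" using ne by (simp add: t_def field_simps)
      finally show False by simp
    qed
    have "psd F K"
      unfolding psd_def
    proof
      fix \<xi>
      have "0 \<le> quad (insert b F) K (\<xi>(b := 0))" using insert.prems(1) unfolding psd_def by blast
      also have "\<dots> = quad F K (\<xi>(b := 0))" unfolding qi by simp
      also have "\<dots> = quad F K \<xi>" using insert.hyps by (intro quad_cong) auto
      finally show "0 \<le> quad F K \<xi>" .
    qed
    then obtain w where w: "\<forall>u\<in>F. \<forall>v\<in>F. K u v = (\<Sum>a\<in>F. w u a * w v a)"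
      using insert.IH insert.prems(2) by blast
    define w' where "w' = (\<lambda>u a. if u = b \<or> a = b then 0 else w u a)"
    have "\<forall>u\<in>insert b F. \<forall>v\<in>insert b F. K u v = (\<Sum>a\<in>insert b F. w' u a * w' v a)"
    proof (intro ballI)
      fix u v assume u: "u \<in> insert b F" and v: "v \<in> insert b F"
      have r: "(\<Sum>a\<in>insert b F. w' u a * w' v a) = (\<Sum>a\<in>F. w' u a * w' v a)"
        using insert.hyps by (simp add: w'_def)
      show "K u v = (\<Sum>a\<in>insert b F. w' u a * w' v a)"
      proof (cases "u = b \<or> v = b")
        case True
        have Kb0': "K v b = 0" if "v \<in> F" for v using Kb0[OF that] insert.prems(2)[of v b] that by auto
        show ?thesis unfolding r using True u v Kb0 Kb0' \<open>K b b = 0\<close>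
          by (auto simp: w'_def)
      next
        case False
        then have "u \<in> F" "v \<in> F" using u v by auto
        then show ?thesis unfolding r using w False insert.hyps
          by (auto simp: w'_def intro!: sum.cong)
      qed
    qed
    then show ?thesis by blast
  next
    case False
    then have pos: "K b b > 0" using Kbb by simp
    define r where "r = (\<lambda>u. K b u / sqrt (K b b))"
    define K' where "K' = (\<lambda>u v. K u v - r u * r v)"
    have rb: "r b = sqrt (K b b)" using pos by (simp add: r_def real_div_sqrt)
    have K'b: "K' b v = 0" for v
      using pos by (simp add: K'_def r_def)
    have K'sym: "K' u v = K' v u" if "u \<in> insert b F" "v \<in> insert b F" for u v
      using insert.prems(2)[OF that] by (simp add: K'_def mult.commute)
    have "psd F K'"
      unfolding psd_def
    proof
      fix \<xi>
      define c where "c = - (\<Sum>v\<in>F. \<xi> v * K b v) / K b b"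
      define \<xi>' where "\<xi>' = \<xi>(b := c)"
      have s0: "(\<Sum>u\<in>insert b F. \<xi>' u * r u) = 0"
      proof -
        have "(\<Sum>u\<in>insert b F. \<xi>' u * r u) = c * r b + (\<Sum>u\<in>F. \<xi> u * r u)"
          using insert.hyps by (simp add: \<xi>'_def) (intro sum.cong, auto)
        also have "(\<Sum>u\<in>F. \<xi> u * r u) = (\<Sum>u\<in>F. \<xi> u * K b u) / sqrt (K b b)"
          by (simp add: r_def sum_divide_distrib)
        also have "c * r b = - (\<Sum>v\<in>F. \<xi> v * K b v) / sqrt (K b b)"
          using pos unfolding c_def rb by (simp add: field_simps)
        finally show ?thesis by simp
      qed
      have "0 \<le> quad (insert b F) K \<xi>'" using insert.prems(1) unfolding psd_def by blast
      also have "\<dots> = quad (insert b F) K' \<xi>'"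
        unfolding K'_def quad_diff_rank1 s0 by simp
      also have "\<dots> = quad F K' \<xi>'"
      proof -
        have "quad (insert b F) K' \<xi>' = \<xi>' b * \<xi>' b * K' b b + 2 * \<xi>' b * (\<Sum>v\<in>F. \<xi>' v * K' b v) + quad F K' \<xi>'"
          by (rule quad_insert) (use insert K'sym in auto)
        then show ?thesis using K'b by simp
      qed
      also have "\<dots> = quad F K' \<xi>" using insert.hyps by (intro quad_cong) (auto simp: \<xi>'_def)
      finally show "0 \<le> quad F K' \<xi>" .
    qed
    then obtain w where w: "\<forall>u\<in>F. \<forall>v\<in>F. K' u v = (\<Sum>a\<in>F. w u a * w v a)"
      using insert.IH K'sym by blast
    define w' where "w' = (\<lambda>u a. if a = b then r u else if u = b then 0 else w u a)"
    have "\<forall>u\<in>insert b F. \<forall>v\<in>insert b F. K u v = (\<Sum>a\<in>insert b F. w' u a * w' v a)"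
    proof (intro ballI)
      fix u v assume u: "u \<in> insert b F" and v: "v \<in> insert b F"
      have r: "(\<Sum>a\<in>insert b F. w' u a * w' v a) = r u * r v + (\<Sum>a\<in>F. w' u a * w' v a)"
        using insert.hyps by (simp add: w'_def)
      show "K u v = (\<Sum>a\<in>insert b F. w' u a * w' v a)"
      proof (cases "u = b \<or> v = b")
        case True
        have z: "(\<Sum>a\<in>F. w' u a * w' v a) = 0"
          using True insert.hyps by (intro sum.neutral) (auto simp: w'_def)
        show ?thesis unfolding r z using True u v insert.prems(2)[of b v] insert.prems(2)[of u b] pos
          by (auto simp: r_def rb) 
      next
        case False
        then have "u \<in> F" "v \<in> F" using u v by auto
        have "(\<Sum>a\<in>F. w' u a * w' v a) = K' u v"
          using w \<open>u \<in> F\<close> \<open>v \<in> F\<close> False insert.hyps by (auto simp: w'_def intro!: sum.cong)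
        then show ?thesis unfolding r by (simp add: K'_def)
      qed
    qed
    then show ?thesis by blast
  qed
qed



lemma psd_schur:
  assumes "psd F M" "finite A" "\<And>u v. u \<in> F \<Longrightarrow> v \<in> F \<Longrightarrow> K u v = (\<Sum>a\<in>A. w u a * w v a)"
  shows "psd F (\<lambda>u v. M u v * K u v)"
  unfolding psd_def
proof
  fix \<xi>
  have "quad F (\<lambda>u v. M u v * K u v) \<xi> = (\<Sum>a\<in>A. quad F M (\<lambda>u. \<xi> u * w u a))"
    unfolding quad_def using assms(3)
    by (simp add: sum_distrib_left sum_distrib_right mult_ac sum.swap[of _ A] cong: sum.cong)
  also have "\<dots> \<ge> 0" using assms(1) unfolding psd_def by (intro sum_nonneg) auto
  finally show "0 \<le> quad F (\<lambda>u v. M u v * K u v) \<xi>" .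
qed

lemma psd_power:
  assumes "finite F" "psd F K" "\<And>u v. u \<in> F \<Longrightarrow> v \<in> F \<Longrightarrow> K u v = K v u"
  shows "psd F (\<lambda>u v. K u v ^ m)"
proof -
  obtain w where w: "\<forall>u\<in>F. \<forall>v\<in>F. K u v = (\<Sum>a\<in>F. w u a * w v a)"
    using psd_gram[OF assms] by blast
  show ?thesis
  proof (induction m)
    case 0
    show ?case unfolding psd_def quad_def
      by (simp add: sum_product[symmetric] flip: power2_eq_square)
  next
    case (Suc m)
    have "psd F (\<lambda>u v. K u v ^ m * K u v)"
      by (rule psd_schur[OF Suc assms(1)]) (use w in auto)
    then show ?case by (simp add: mult.commute)
  qed
qed

lemma psd_exp:
  assumes "finite F" "psd F K" "\<And>u v. u \<in> F \<Longrightarrow> v \<in> F \<Longrightarrow> K u v = K v u" "c \<ge> 0"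
  shows "psd F (\<lambda>u v. exp (c * K u v))"
  unfolding psd_def
proof
  fix \<xi>
  define T where "T = (\<lambda>n. \<Sum>u\<in>F. \<Sum>v\<in>F. \<xi> u * \<xi> v * ((c * K u v) ^ n /\<^sub>R fact n))"
  have "T sums quad F (\<lambda>u v. exp (c * K u v)) \<xi>"
    unfolding quad_def T_def
    by (intro sums_sum sums_mult exp_converges)
  moreover have "T n = (c ^ n / fact n) * quad F (\<lambda>u v. K u v ^ n) \<xi>" for n
  proof -
    have "T n = (\<Sum>u\<in>F. \<Sum>v\<in>F. (c ^ n / fact n) * (\<xi> u * \<xi> v * K u v ^ n))"
      unfolding T_def by (intro sum.cong refl) (simp add: power_mult_distrib divide_inverse)
    also have "\<dots> = (c ^ n / fact n) * quad F (\<lambda>u v. K u v ^ n) \<xi>"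
      unfolding quad_def sum_distrib_left ..
    finally show ?thesis .
  qed
  moreover have "(c ^ n / fact n) * quad F (\<lambda>u v. K u v ^ n) \<xi> \<ge> 0" for n
    using psd_power[OF assms(1-3), of n] assms(4) unfolding psd_def by simp
  ultimately have "\<And>n. 0 \<le> T n" "T sums quad F (\<lambda>u v. exp (c * K u v)) \<xi>" by auto
  then show "0 \<le> quad F (\<lambda>u v. exp (c * K u v)) \<xi>"
    using sums_le[OF _ sums_zero] by blast
qed

definition cnd :: "'a set \<Rightarrow> ('a \<Rightarrow> 'a \<Rightarrow> real) \<Rightarrow> bool" where
  "cnd F A \<longleftrightarrow> (\<forall>\<xi>. sum \<xi> F = 0 \<longrightarrow> quad F A \<xi> \<le> 0)"

lemma cnd_psd:
  assumes "finite F" "u0 \<in> F" "cnd F A" "\<And>u v. u \<in> F \<Longrightarrow> v \<in> F \<Longrightarrow> A u v = A v u"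
    "A u0 u0 = 0"
  shows "psd F (\<lambda>u v. A u u0 + A v u0 - A u v)"
  unfolding psd_def
proof
  fix \<xi> :: "'a \<Rightarrow> real"
  define s where "s = sum \<xi> F"
  define \<delta> where "\<delta> = (\<lambda>u. if u = u0 then 1 else (0::real))"
  define \<zeta> where "\<zeta> = (\<lambda>u. \<xi> u - s * \<delta> u)"
  have sd: "sum \<delta> F = 1" using assms(1,2) by (simp add: \<delta>_def)
  have "sum \<zeta> F = 0" unfolding \<zeta>_def s_def by (simp add: sum_subtractf sum_distrib_left[symmetric] sd)
  then have 0: "quad F A \<zeta> \<le> 0" using assms(3) unfolding cnd_def by blast
  have dsum: "(\<Sum>v\<in>F. \<delta> v * f v) = f u0" for f :: "'a \<Rightarrow> real"
  proof -
    have "(\<Sum>v\<in>F. \<delta> v * f v) = (\<Sum>v\<in>F. if v = u0 then f v else 0)"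
      by (intro sum.cong) (auto simp: \<delta>_def)
    also have "\<dots> = f u0" using assms(1,2) by (simp add: sum.delta')
    finally show ?thesis .
  qed
  have e: "\<zeta> u * \<zeta> v * A u v = \<xi> u * \<xi> v * A u v - s * (\<xi> u * (\<delta> v * A u v))
      - s * (\<delta> u * (\<xi> v * A u v)) + s * s * (\<delta> u * (\<delta> v * A u v))" for u v
    by (simp add: \<zeta>_def algebra_simps)
  have "quad F A \<zeta> = quad F A \<xi> - s * (\<Sum>u\<in>F. \<xi> u * (\<Sum>v\<in>F. \<delta> v * A u v))
       - s * (\<Sum>u\<in>F. \<delta> u * (\<Sum>v\<in>F. \<xi> v * A u v)) + s * s * (\<Sum>u\<in>F. \<delta> u * (\<Sum>v\<in>F. \<delta> v * A u v))"
    unfolding quad_def e sum.distrib sum_subtractf sum_distrib_left ..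
  also have "\<dots> = quad F A \<xi> - s * (\<Sum>u\<in>F. \<xi> u * A u u0) - s * (\<Sum>v\<in>F. \<xi> v * A u0 v) + s * s * A u0 u0"
    by (simp only: dsum)
  also have "(\<Sum>v\<in>F. \<xi> v * A u0 v) = (\<Sum>u\<in>F. \<xi> u * A u u0)"
    using assms(2,4) by (intro sum.cong) auto
  finally have 1: "quad F A \<zeta> = quad F A \<xi> - 2 * s * (\<Sum>u\<in>F. \<xi> u * A u u0)"
    using assms(5) by simp
  have e2: "\<xi> u * \<xi> v * (A u u0 + A v u0 - A u v) = (\<xi> u * A u u0) * \<xi> v + \<xi> u * (\<xi> v * A v u0) - \<xi> u * \<xi> v * A u v" for u v
    by (simp add: algebra_simps)
  have i: "(\<Sum>v\<in>F. (\<xi> u * A u u0) * \<xi> v + \<xi> u * (\<xi> v * A v u0) - \<xi> u * \<xi> v * A u v)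
     = (\<xi> u * A u u0) * s + \<xi> u * (\<Sum>v\<in>F. \<xi> v * A v u0) - (\<Sum>v\<in>F. \<xi> u * \<xi> v * A u v)" for u
    unfolding sum.distrib sum_subtractf s_def sum_distrib_left ..
  have "quad F (\<lambda>u v. A u u0 + A v u0 - A u v) \<xi> = (\<Sum>u\<in>F. (\<xi> u * A u u0) * s + \<xi> u * (\<Sum>v\<in>F. \<xi> v * A v u0) - (\<Sum>v\<in>F. \<xi> u * \<xi> v * A u v))"
    unfolding quad_def e2 i ..
  also have "\<dots> = (\<Sum>u\<in>F. \<xi> u * A u u0) * s + s * (\<Sum>v\<in>F. \<xi> v * A v u0) - quad F A \<xi>"
    unfolding quad_def s_def sum.distrib sum_subtractf sum_distrib_right ..
  finally have "quad F (\<lambda>u v. A u u0 + A v u0 - A u v) \<xi> = (\<Sum>u\<in>F. \<xi> u * A u u0) * s + s * (\<Sum>v\<in>F. \<xi> v * A v u0) - quad F A \<xi>" .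
  moreover have "2 * s * (\<Sum>u\<in>F. \<xi> u * A u u0) = (\<Sum>u\<in>F. \<xi> u * A u u0) * s + s * (\<Sum>v\<in>F. \<xi> v * A v u0)"
    by simp
  ultimately show "0 \<le> quad F (\<lambda>u v. A u u0 + A v u0 - A u v) \<xi>" using 0 1 by linarith
qed

lemma cnd_exp_nonneg:
  assumes "finite F" "cnd F A" "\<And>u v. u \<in> F \<Longrightarrow> v \<in> F \<Longrightarrow> A u v = A v u"
    "\<And>u. u \<in> F \<Longrightarrow> A u u = 0" "t \<ge> 0"
  shows "0 \<le> quad F (\<lambda>u v. exp (- (t * A u v))) \<xi>"
proof (cases "F = {}")
  case True then show ?thesis by (simp add: quad_def)
next
  case False
  then obtain u0 where u0: "u0 \<in> F" by blast
  define K where "K = (\<lambda>u v. A u u0 + A v u0 - A u v)"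
  have "psd F K" unfolding K_def by (rule cnd_psd[OF assms(1) u0 assms(2,3)]) (use assms(4) u0 in auto)
  moreover have "K u v = K v u" if "u \<in> F" "v \<in> F" for u v using assms(3)[OF that] by (simp add: K_def)
  ultimately have "psd F (\<lambda>u v. exp (t * K u v))" using psd_exp[OF assms(1)] assms(5) by blast
  then have "0 \<le> quad F (\<lambda>u v. exp (t * K u v)) (\<lambda>u. \<xi> u * exp (- (t * A u u0)))"
    unfolding psd_def by blast
  also have "\<dots> = quad F (\<lambda>u v. exp (- (t * A u v))) \<xi>"
    unfolding quad_def
  proof (intro sum.cong refl)
    fix u v
    have "exp (- (t * A u u0)) * exp (- (t * A v u0)) * exp (t * K u v) = exp (- (t * A u v))"
    proof -
      have "-(t*A u u0) + -(t*A v u0) + t * K u v = -(t*A u v)" by (simp add: K_def algebra_simps)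
      then show ?thesis by (metis exp_add)
    qed
    then show "\<xi> u * exp (- (t * A u u0)) * (\<xi> v * exp (- (t * A v u0))) * exp (t * K u v) =
         \<xi> u * \<xi> v * exp (- (t * A u v))"
      by (simp add: mult_ac)
  qed
  finally show ?thesis .
qed



lemma hk_to_lborel:
  fixes f :: "real \<Rightarrow> real"
  assumes "f integrable_on S" "\<And>x. x \<in> S \<Longrightarrow> 0 \<le> f x"
    "(\<lambda>x. indicator S x * f x) \<in> borel_measurable borel"
  shows "integrable lborel (\<lambda>x. indicator S x * f x)"
proof -
  have "f absolutely_integrable_on S" by (rule nonnegative_absolutely_integrable_1[OF assms(1,2)])
  then have "integrable lebesgue (\<lambda>x. indicator S x * f x)"
    unfolding set_integrable_def by simp
  then show ?thesis using integrable_completion[of "(\<lambda>x. indicator S x * f x)" lborel] assms(3)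
    by simp
qed

lemma int_b1:
  assumes "0 < a" "a < 1"
  shows "integrable lborel (\<lambda>x::real. indicator {0<..1} x * x powr (-a))"
  by (rule hk_to_lborel[OF integrable_on_powr_from_0']) (use assms in auto)

lemma int_b2:
  assumes "0 < a"
  shows "integrable lborel (\<lambda>x::real. indicator {1..} x * x powr (-1-a))"
proof (rule hk_to_lborel)
  show "(\<lambda>x. x powr (-1-a)) integrable_on {1..}"
    using has_integral_powr_to_inf[of "-1-a" 1] assms unfolding integrable_on_def by auto
qed auto

definition gk :: "real \<Rightarrow> real \<Rightarrow> real \<Rightarrow> real" where
  "gk a s x = indicator {0<..} x * ((1 - exp (- (x * s))) * x powr (-1-a))"

lemma gk_meas: "gk a s \<in> borel_measurable lborel"
  unfolding gk_def by measurable

lemma gk0: "gk a 0 = (\<lambda>_. 0)"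
  by (simp add: gk_def fun_eq_iff)

lemma gk_nonneg: "s \<ge> 0 \<Longrightarrow> 0 \<le> gk a s x"
  unfolding gk_def by (auto simp: indicator_def intro!: mult_nonneg_nonneg)

lemma int_gk1:
  assumes "0 < a" "a < 1"
  shows "integrable lborel (gk a 1)"
proof (rule Bochner_Integration.integrable_bound[OF Bochner_Integration.integrable_add[OF int_b1[OF assms] int_b2[OF assms(1)]] gk_meas])
  show "AE x in lborel. norm (gk a 1 x) \<le> norm (indicator {0<..1} x * x powr (-a) + indicator {1..} x * x powr (-1-a))"
  proof (rule AE_I2)
    fix x :: real
    show "norm (gk a 1 x) \<le> norm (indicator {0<..1} x * x powr (-a) + indicator {1..} x * x powr (-1-a))"
    proof (cases "x \<le> 0")
      case True then show ?thesis by (simp add: gk_def)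
    next
      case False
      then have x: "x > 0" by simp
      have e1: "1 - exp (-x) \<le> x" using exp_ge_add_one_self[of "-x"] by simp
      have e2: "0 \<le> 1 - exp (-x)" using x by simp
      have e3: "1 - exp (-x) \<le> 1" by simp
      have g: "gk a 1 x = (1 - exp (-x)) * x powr (-1-a)" using x by (simp add: gk_def)
      have gn: "0 \<le> gk a 1 x" by (rule gk_nonneg) simp
      show ?thesis
      proof (cases "x \<le> 1")
        case True
        have "gk a 1 x \<le> x * x powr (-1-a)" unfolding g by (intro mult_right_mono e1) simp
        also have "\<dots> = x powr (-a)" using x by (simp add: powr_mult_base)
        finally have 1: "gk a 1 x \<le> x powr (-a)" .
        have 2: "0 \<le> indicator {1..} x * x powr (-1-a)" by (simp add: indicator_def)
        have 3: "indicator {0<..1} x = (1::real)" using x True by simp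
        have "norm (indicator {0<..1} x * x powr (-a) + indicator {1..} x * x powr (-1-a)) = x powr (-a) + indicator {1..} x * x powr (-1-a)"
          unfolding 3 using 2 by simp
        moreover have "norm (gk a 1 x) = gk a 1 x" using gn by simp
        ultimately show ?thesis using 1 2 by linarith
      next
        case False
        have "gk a 1 x \<le> 1 * x powr (-1-a)" unfolding g by (intro mult_right_mono e3) simp
        then show ?thesis using gn x False by simp
      qed
    qed
  qed
qed

lemma gk_scale:
  assumes "s > 0"
  shows "gk a s x = s powr (1 + a) * gk a 1 (s * x)"
proof (cases "x > 0")
  case True
  have "(s * x) powr (-1-a) = s powr (-1-a) * x powr (-1-a)" using True assms by (simp add: powr_mult)
  moreover have "s powr (1 + a) * s powr (-1-a) = 1" using assms by (simp add: powr_add[symmetric])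
  ultimately show ?thesis using True assms unfolding gk_def
    by (simp add: mult_ac zero_less_mult_iff)
next
  case False
  then show ?thesis using assms by (simp add: gk_def zero_less_mult_iff)
qed

lemma int_gk:
  assumes "0 < a" "a < 1" "s \<ge> 0"
  shows "integrable lborel (gk a s)" "integral\<^sup>L lborel (gk a s) = s powr a * integral\<^sup>L lborel (gk a 1)"
proof -
  have "integrable lborel (gk a s) \<and> integral\<^sup>L lborel (gk a s) = s powr a * integral\<^sup>L lborel (gk a 1)"
  proof (cases "s = 0")
    case True then show ?thesis by (simp add: gk0)
  next
    case False
    then have s: "s > 0" using assms by simp
    have eq: "gk a s = (\<lambda>x. s powr (1 + a) * gk a 1 (0 + s * x))" using gk_scale[OF s] by auto
    have i1: "integrable lborel (\<lambda>x. gk a 1 (0 + s * x))"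
      using lborel_integrable_real_affine[OF int_gk1[OF assms(1,2)], of s 0] s by simp
    have "integral\<^sup>L lborel (gk a 1) = s * integral\<^sup>L lborel (\<lambda>x. gk a 1 (0 + s * x))"
      using lborel_integral_real_affine[of s "gk a 1" 0] s by simp
    then have "integral\<^sup>L lborel (gk a s) = s powr (1 + a) * (integral\<^sup>L lborel (gk a 1) / s)"
      unfolding eq using s by simp
    also have "\<dots> = s powr a * integral\<^sup>L lborel (gk a 1)"
      using s by (simp add: powr_add field_simps)
    finally show ?thesis unfolding eq using i1 by auto
  qed
  then show "integrable lborel (gk a s)" "integral\<^sup>L lborel (gk a s) = s powr a * integral\<^sup>L lborel (gk a 1)"
    by auto
qed

lemma not_AE_le: "\<not> (AE x in lborel. (x::real) \<le> L)"
proof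
  assume "AE x in lborel. x \<le> L"
  then have "emeasure lborel {L<..} = 0"
    by (subst (asm) AE_iff_measurable[of "{L<..}"]) auto
  moreover have "emeasure lborel {L<..<L+1} \<le> emeasure lborel {L<..}"
    by (intro emeasure_mono) auto
  ultimately show False by simp
qed

lemma integral_pos_lborel:
  fixes h :: "real \<Rightarrow> real"
  assumes "integrable lborel h" "\<And>x. 0 \<le> h x" "\<And>x. x > L \<Longrightarrow> h x > 0"
  shows "integral\<^sup>L lborel h > 0"
proof -
  have "integral\<^sup>L lborel h \<ge> 0" using assms(2) by (simp add: integral_nonneg)
  moreover have "integral\<^sup>L lborel h \<noteq> 0"
  proof
    assume "integral\<^sup>L lborel h = 0"
    then have "AE x in lborel. h x = 0"
      using integral_nonneg_eq_0_iff_AE[OF assms(1)] assms(2) by simp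
    moreover have "AE x in lborel. h x = 0 \<longrightarrow> x \<le> L"
    proof (rule AE_I2, rule impI)
      fix x assume "h x = 0" then show "x \<le> L" using assms(3)[of x] by force
    qed
    ultimately have "AE x in lborel. x \<le> L" by (rule AE_mp)
    then show False using not_AE_le by blast
  qed
  ultimately show ?thesis by simp
qed

lemma int_gk1_pos:
  assumes "0 < a" "a < 1"
  shows "integral\<^sup>L lborel (gk a 1) > 0"
proof (rule integral_pos_lborel[OF int_gk1[OF assms]])
  show "0 \<le> gk a 1 x" for x by (rule gk_nonneg) simp
  show "gk a 1 x > 0" if "x > 0" for x using that by (simp add: gk_def)
qed



lemma exp_neg_lim: "c > 0 \<Longrightarrow> ((\<lambda>x::real. exp (- (x * c))) \<longlongrightarrow> 0) at_top"
proof -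
  assume c: "c > 0"
  have "LIM x at_top. x * c :> at_top"
    by (rule filterlim_at_top_mult_tendsto_pos[OF tendsto_const c filterlim_ident])
  then have "LIM x at_top. - (x * c) :> at_bot"
    by (simp add: filterlim_uminus_at_bot)
  then show ?thesis by (rule filterlim_compose[OF exp_at_bot])
qed

lemma cnd_strict:
  assumes F: "finite F" and cnd: "cnd F A"
    and sym: "\<And>u v. u \<in> F \<Longrightarrow> v \<in> F \<Longrightarrow> A u v = A v u"
    and diag: "\<And>u. u \<in> F \<Longrightarrow> A u u = 0"
    and pos: "\<And>u v. u \<in> F \<Longrightarrow> v \<in> F \<Longrightarrow> u \<noteq> v \<Longrightarrow> A u v > 0"
    and a: "0 < a" "a < 1"
    and s0: "sum \<xi> F = 0" and nz: "\<exists>u\<in>F. \<xi> u \<noteq> 0"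
  shows "quad F (\<lambda>u v. A u v powr a) \<xi> < 0"
proof -
  have Anonneg: "A u v \<ge> 0" if "u \<in> F" "v \<in> F" for u v
    using pos[OF that] diag that by (cases "u = v") auto
  define I1 where "I1 = integral\<^sup>L lborel (gk a 1)"
  have I1: "I1 > 0" unfolding I1_def by (rule int_gk1_pos[OF a])
  define G where "G = (\<lambda>x. quad F (\<lambda>u v. exp (- (x * A u v))) \<xi>)"
  define H where "H = (\<lambda>x. indicator {0<..} x * x powr (-1-a) * G x)"
  define P where "P = (\<lambda>x. \<Sum>u\<in>F. \<Sum>v\<in>F. \<xi> u * \<xi> v * gk a (A u v) x)"
  have intP: "integrable lborel P"
    unfolding P_def
    by (intro Bochner_Integration.integrable_sum Bochner_Integration.integrable_mult_right int_gk(1)[OF a] Anonneg)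
  have qone: "(\<Sum>u\<in>F. \<Sum>v\<in>F. \<xi> u * \<xi> v) = 0"
    using s0 by (simp add: sum_product[symmetric])
  have PH: "P x = - H x" for x
  proof -
    have "P x = (\<Sum>u\<in>F. \<Sum>v\<in>F. indicator {0<..} x * x powr (-1-a) * (\<xi> u * \<xi> v - \<xi> u * \<xi> v * exp (- (x * A u v))))"
      unfolding P_def gk_def by (intro sum.cong refl) (simp add: algebra_simps)
    also have "\<dots> = indicator {0<..} x * x powr (-1-a) * ((\<Sum>u\<in>F. \<Sum>v\<in>F. \<xi> u * \<xi> v) - G x)"
      unfolding G_def quad_def right_diff_distrib sum_distrib_left sum_subtractf ..
    finally show ?thesis unfolding qone H_def by simp
  qed
  have intH: "integrable lborel H"
  proof -
    have "integrable lborel (\<lambda>x. - P x)" using intP by simp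
    moreover have "(\<lambda>x. - P x) = H" using PH by auto
    ultimately show ?thesis by simp
  qed
  have Gnn: "G x \<ge> 0" if "x \<ge> 0" for x
    unfolding G_def by (rule cnd_exp_nonneg[OF F cnd sym diag that])
  have Hnn: "H x \<ge> 0" for x
    using Gnn[of x] by (cases "x > 0") (auto simp: H_def)
  have lim: "(G \<longlongrightarrow> (\<Sum>u\<in>F. \<Sum>v\<in>F. if u = v then \<xi> u * \<xi> v else 0)) at_top"
    unfolding G_def quad_def
  proof (intro tendsto_sum)
    fix u v assume uv: "u \<in> F" "v \<in> F"
    show "((\<lambda>x. \<xi> u * \<xi> v * exp (- (x * A u v))) \<longlongrightarrow> (if u = v then \<xi> u * \<xi> v else 0)) at_top"
    proof (cases "u = v")
      case True then show ?thesis using diag uv by simp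
    next
      case False
      then show ?thesis using tendsto_mult_right_zero[OF exp_neg_lim[OF pos[OF uv False]]]
        by simp
    qed
  qed
  have "(\<Sum>u\<in>F. \<Sum>v\<in>F. if u = v then \<xi> u * \<xi> v else 0) = (\<Sum>u\<in>F. \<xi> u * \<xi> u)"
    using F by (simp add: sum.delta)
  also have "\<dots> > 0"
  proof -
    obtain u0 where u0: "u0 \<in> F" "\<xi> u0 \<noteq> 0" using nz by blast
    have "0 < \<xi> u0 * \<xi> u0" using u0 by (auto simp: zero_less_mult_iff linorder_neq_iff)
    also have "\<dots> \<le> (\<Sum>u\<in>F. \<xi> u * \<xi> u)"
      using F u0 by (intro member_le_sum) auto
    finally show ?thesis .
  qed
  finally have "eventually (\<lambda>x. G x > 0) at_top"
    using order_tendstoD(1)[OF lim] by blast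
  then obtain L where L: "\<And>x. x \<ge> L \<Longrightarrow> G x > 0"
    unfolding eventually_at_top_linorder by blast
  have Hpos: "H x > 0" if "x > max L 0" for x
    using L[of x] that by (simp add: H_def)
  have intHpos: "integral\<^sup>L lborel H > 0"
    by (rule integral_pos_lborel[OF intH Hnn Hpos])
  have "quad F (\<lambda>u v. A u v powr a) \<xi> * I1 = (\<Sum>u\<in>F. \<Sum>v\<in>F. \<xi> u * \<xi> v * integral\<^sup>L lborel (gk a (A u v)))"
    unfolding quad_def sum_distrib_right I1_def
    by (intro sum.cong refl) (simp add: int_gk(2)[OF a Anonneg])
  also have "\<dots> = integral\<^sup>L lborel P"
    unfolding P_def
    by (simp add: Bochner_Integration.integral_sum Bochner_Integration.integrable_sum
        int_gk(1)[OF a Anonneg] Bochner_Integration.integrable_mult_right)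
  also have "\<dots> = - integral\<^sup>L lborel H"
  proof -
    have "P = (\<lambda>x. - H x)" using PH by auto
    then show ?thesis by simp
  qed
  finally have "quad F (\<lambda>u v. A u v powr a) \<xi> * I1 < 0" using intHpos by simp
  then show ?thesis using I1 by (simp add: mult_less_0_iff)
qed



lemma pairs_half:
  fixes f :: "nat \<Rightarrow> nat \<Rightarrow> real"
  assumes sym: "\<And>k l. f k l = f l k" and diag: "\<And>k. f k k = 0"
  shows "2 * (\<Sum>k<m. \<Sum>l\<in>{k<..<m}. f k l) = (\<Sum>k<m. \<Sum>l<m. f k l)"
proof (induction m)
  case 0 then show ?case by simp
next
  case (Suc m)
  have i: "{k<..<Suc m} = insert m {k<..<m}" if "k < m" for k using that by auto
  have e: "{m<..<Suc m} = {}" by auto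
  have "(\<Sum>k<Suc m. \<Sum>l\<in>{k<..<Suc m}. f k l) = (\<Sum>k<m. \<Sum>l\<in>{k<..<Suc m}. f k l)"
    by (simp add: e)
  also have "\<dots> = (\<Sum>k<m. f k m + (\<Sum>l\<in>{k<..<m}. f k l))"
    by (intro sum.cong refl) (simp add: i)
  also have "\<dots> = (\<Sum>k<m. f k m) + (\<Sum>k<m. \<Sum>l\<in>{k<..<m}. f k l)"
    by (simp add: sum.distrib)
  finally have L: "(\<Sum>k<Suc m. \<Sum>l\<in>{k<..<Suc m}. f k l) = (\<Sum>k<m. f k m) + (\<Sum>k<m. \<Sum>l\<in>{k<..<m}. f k l)" .
  have "(\<Sum>k<Suc m. \<Sum>l<Suc m. f k l) = (\<Sum>k<m. \<Sum>l<m. f k l) + (\<Sum>k<m. f k m) + (\<Sum>l<m. f m l) + f m m"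
    by (simp add: sum.distrib)
  also have "(\<Sum>l<m. f m l) = (\<Sum>k<m. f k m)" using sym by simp
  finally show ?case unfolding L using Suc.IH diag by simp
qed

lemma count_rep:
  fixes f :: "'p \<Rightarrow> real" and m :: nat
  assumes "finite S" "\<forall>i<m. a i \<in> S"
  shows "(\<Sum>j<m. f (a j)) = (\<Sum>u\<in>S. real (card {j. j < m \<and> a j = u}) * f u)"
proof -
  have "(\<Sum>u\<in>S. \<Sum>j\<in>{j. j \<in> {..<m} \<and> a j = u}. f (a j)) = (\<Sum>j<m. f (a j))"
    by (rule sum.group) (use assms in auto)
  then have "(\<Sum>j<m. f (a j)) = (\<Sum>u\<in>S. \<Sum>j\<in>{j. j \<in> {..<m} \<and> a j = u}. f (a j))" by simp
  also have "\<dots> = (\<Sum>u\<in>S. real (card {j. j < m \<and> a j = u}) * f u)"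
    by (intro sum.cong refl) simp
  finally show ?thesis .
qed

lemma gr_core:
  fixes D :: "'p \<Rightarrow> 'p \<Rightarrow> real" and m :: nat
  assumes S: "finite S"
    and sym: "\<And>u v. u \<in> S \<Longrightarrow> v \<in> S \<Longrightarrow> D u v = D v u"
    and diag: "\<And>u. u \<in> S \<Longrightarrow> D u u = 0"
    and ab: "\<forall>i<m. a i \<in> S \<and> b i \<in> S"
    and ca: "\<And>f. (\<Sum>j<m. f (a j)) = (\<Sum>u\<in>S. ca u * f u)"
    and cb: "\<And>f. (\<Sum>j<m. f (b j)) = (\<Sum>u\<in>S. cb u * f u)"
  shows "(\<Sum>k<m. \<Sum>l\<in>{k<..<m}. D (a k) (a l) + D (b k) (b l)) \<le> (\<Sum>j<m. \<Sum>i<m. D (a j) (b i))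
         \<longleftrightarrow> quad S D (\<lambda>u. ca u - cb u) \<le> 0"
proof -
  define PA where "PA = (\<Sum>u\<in>S. \<Sum>v\<in>S. ca u * ca v * D u v)"
  define PB where "PB = (\<Sum>u\<in>S. \<Sum>v\<in>S. cb u * cb v * D u v)"
  define R where "R = (\<Sum>u\<in>S. \<Sum>v\<in>S. ca u * cb v * D u v)"
  define R' where "R' = (\<Sum>u\<in>S. \<Sum>v\<in>S. cb u * ca v * D u v)"
  have RR: "R' = R"
  proof -
    have "R' = (\<Sum>v\<in>S. \<Sum>u\<in>S. cb u * ca v * D u v)" unfolding R'_def by (rule sum.swap)
    also have "\<dots> = R" unfolding R_def using sym by (intro sum.cong refl) (simp add: mult_ac)
    finally show ?thesis .
  qed
  have dbl: "(\<Sum>j<m. \<Sum>i<m. D (x j) (y i)) = (\<Sum>u\<in>S. \<Sum>v\<in>S. cx u * cy v * D u v)"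
    if cx: "\<And>f. (\<Sum>j<m. f (x j)) = (\<Sum>u\<in>S. cx u * f u)"
      and cy: "\<And>f. (\<Sum>j<m. f (y j)) = (\<Sum>u\<in>S. cy u * f u)" for x y cx cy
  proof -
    have "(\<Sum>j<m. \<Sum>i<m. D (x j) (y i)) = (\<Sum>j<m. \<Sum>v\<in>S. cy v * D (x j) v)"
      by (intro sum.cong refl) (rule cy)
    also have "\<dots> = (\<Sum>u\<in>S. cx u * (\<Sum>v\<in>S. cy v * D u v))" by (rule cx)
    also have "\<dots> = (\<Sum>u\<in>S. \<Sum>v\<in>S. cx u * cy v * D u v)"
      by (simp add: sum_distrib_left mult_ac)
    finally show ?thesis .
  qed
  have symA: "D (a k) (a l) = D (a l) (a k)" if "k < m" "l < m" for k l using ab that sym by auto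
  have L: "2 * (\<Sum>k<m. \<Sum>l\<in>{k<..<m}. D (a k) (a l) + D (b k) (b l)) = PA + PB"
  proof -
    define fa where "fa = (\<lambda>k l. if k < m \<and> l < m then D (a k) (a l) else 0)"
    define fb where "fb = (\<lambda>k l. if k < m \<and> l < m then D (b k) (b l) else 0)"
    have "2 * (\<Sum>k<m. \<Sum>l\<in>{k<..<m}. fa k l) = (\<Sum>k<m. \<Sum>l<m. fa k l)"
      by (rule pairs_half) (use ab sym diag in \<open>auto simp: fa_def\<close>)
    moreover have "2 * (\<Sum>k<m. \<Sum>l\<in>{k<..<m}. fb k l) = (\<Sum>k<m. \<Sum>l<m. fb k l)"
      by (rule pairs_half) (use ab sym diag in \<open>auto simp: fb_def\<close>)
    moreover have "(\<Sum>k<m. \<Sum>l\<in>{k<..<m}. D (a k) (a l) + D (b k) (b l)) =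
        (\<Sum>k<m. \<Sum>l\<in>{k<..<m}. fa k l) + (\<Sum>k<m. \<Sum>l\<in>{k<..<m}. fb k l)"
      unfolding sum.distrib[symmetric] by (intro sum.cong refl) (auto simp: fa_def fb_def)
    moreover have "(\<Sum>k<m. \<Sum>l<m. fa k l) = PA"
      unfolding PA_def using dbl[OF ca ca] by (simp add: fa_def)
    moreover have "(\<Sum>k<m. \<Sum>l<m. fb k l) = PB"
      unfolding PB_def using dbl[OF cb cb] by (simp add: fb_def)
    ultimately show ?thesis by simp
  qed
  have Rr: "(\<Sum>j<m. \<Sum>i<m. D (a j) (b i)) = R" unfolding R_def by (rule dbl[OF ca cb])
  have Q: "quad S D (\<lambda>u. ca u - cb u) = PA + PB - R - R'"
    unfolding quad_def PA_def PB_def R_def R'_def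
    by (simp add: algebra_simps sum_subtractf sum.distrib)
  show ?thesis unfolding Rr Q RR using L by linarith
qed



lemma l1_nonneg: "0 \<le> l1_dist u v"
  unfolding l1_dist_def by (simp add: sum_nonneg)

lemma l1_sym: "l1_dist u v = l1_dist v u"
  unfolding l1_dist_def by (simp add: abs_minus_commute)

lemma l1_zero[simp]: "l1_dist u u = 0"
  unfolding l1_dist_def by simp

lemma l1_pos: "u \<noteq> v \<Longrightarrow> 0 < l1_dist u v"
proof -
  assume "u \<noteq> v"
  then obtain i where i: "u $ i \<noteq> v $ i" by (auto simp: vec_eq_iff)
  have "0 < \<bar>u $ i - v $ i\<bar>" using i by simp
  also have "\<dots> \<le> l1_dist u v" unfolding l1_dist_def
    by (rule member_le_sum) auto
  finally show ?thesis .
qed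

lemma sum_form: "(\<Sum>x\<in>F. \<Sum>y\<in>F. d x y powr p * \<eta> x * \<eta> y) = quad F (\<lambda>u v. d u v powr p) \<eta>"
  unfolding quad_def by (simp add: mult_ac)

lemma cube_l1:
  assumes "u \<in> hamming_cube" "v \<in> hamming_cube"
  shows "l1_dist u v = (u - v) \<bullet> (u - v)"
proof -
  have "\<bar>u $ i - v $ i\<bar> = (u $ i - v $ i) * (u $ i - v $ i)" for i
  proof -
    have "u $ i = 0 \<or> u $ i = 1" "v $ i = 0 \<or> v $ i = 1" using assms unfolding hamming_cube_def by auto
    then show ?thesis by (elim disjE) auto
  qed
  then show ?thesis unfolding l1_dist_def inner_vec_def by simp
qed

lemma cube_quad1:
  assumes "F \<subseteq> hamming_cube" "finite F" "sum \<eta> F = 0"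
  shows "quad F (\<lambda>u v. l1_dist u v powr 1) \<eta> = -2 * ((\<Sum>u\<in>F. \<eta> u *\<^sub>R u) \<bullet> (\<Sum>u\<in>F. \<eta> u *\<^sub>R u))"
proof -
  have e: "\<eta> u * \<eta> v * l1_dist u v powr 1 = (\<eta> u * (u \<bullet> u)) * \<eta> v + \<eta> u * (\<eta> v * (v \<bullet> v)) - 2 * (\<eta> u * \<eta> v * (u \<bullet> v))"
    if "u \<in> F" "v \<in> F" for u v
  proof -
    have "l1_dist u v powr 1 = (u - v) \<bullet> (u - v)"
      using cube_l1[of u v] assms(1) that l1_nonneg[of u v] by auto
    also have "\<dots> = u \<bullet> u + v \<bullet> v - 2 * (u \<bullet> v)"
      by (simp add: inner_diff_left inner_diff_right inner_commute)
    finally have h: "l1_dist u v powr 1 = u \<bullet> u + v \<bullet> v - 2 * (u \<bullet> v)" .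
    show ?thesis unfolding h by (simp add: algebra_simps)
  qed
  have "quad F (\<lambda>u v. l1_dist u v powr 1) \<eta> =
     (\<Sum>u\<in>F. \<Sum>v\<in>F. (\<eta> u * (u \<bullet> u)) * \<eta> v + \<eta> u * (\<eta> v * (v \<bullet> v)) - 2 * (\<eta> u * \<eta> v * (u \<bullet> v)))"
    unfolding quad_def using e by (intro sum.cong refl) auto
  also have "\<dots> = (\<Sum>u\<in>F. \<Sum>v\<in>F. (\<eta> u * (u \<bullet> u)) * \<eta> v) + (\<Sum>u\<in>F. \<Sum>v\<in>F. \<eta> u * (\<eta> v * (v \<bullet> v)))
      - 2 * (\<Sum>u\<in>F. \<Sum>v\<in>F. \<eta> u * \<eta> v * (u \<bullet> v))"
    by (simp only: sum.distrib sum_subtractf sum_distrib_left)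
  also have "(\<Sum>u\<in>F. \<Sum>v\<in>F. (\<eta> u * (u \<bullet> u)) * \<eta> v) = 0"
    by (simp add: sum_distrib_left[symmetric] assms(3))
  also have "(\<Sum>u\<in>F. \<Sum>v\<in>F. \<eta> u * (\<eta> v * (v \<bullet> v))) = 0"
    by (simp add: sum_distrib_left[symmetric] sum_distrib_right[symmetric] assms(3))
  also have "(\<Sum>u\<in>F. \<Sum>v\<in>F. \<eta> u * \<eta> v * (u \<bullet> v)) = (\<Sum>u\<in>F. \<eta> u *\<^sub>R u) \<bullet> (\<Sum>u\<in>F. \<eta> u *\<^sub>R u)"
    by (simp add: inner_sum_left inner_sum_right sum_distrib_left mult_ac inner_commute)
  finally show ?thesis using assms(3) by simp
qed



abbreviation Dp :: "real \<Rightarrow> real ^ 'n \<Rightarrow> real ^ 'n \<Rightarrow> real" where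
  "Dp p \<equiv> (\<lambda>u v. l1_dist u v powr p)"

lemma cnd_gr:
  fixes S :: "(real ^ 'n) set"
  assumes S: "finite S" and p: "p \<ge> 0" and c: "cnd S (Dp p)"
  shows "gr_exponent l1_dist S p"
  unfolding gr_exponent_def
proof (intro conjI allI impI p)
  fix m :: nat and a b :: "nat \<Rightarrow> real ^ 'n"
  assume ab: "\<forall>i<m. a i \<in> S \<and> b i \<in> S"
  define ca where "ca = (\<lambda>u. real (card {j. j < m \<and> a j = u}))"
  define cb where "cb = (\<lambda>u. real (card {j. j < m \<and> b j = u}))"
  have ra: "(\<Sum>j<m. f (a j)) = (\<Sum>u\<in>S. ca u * f u)" for f :: "_ \<Rightarrow> real"
    unfolding ca_def by (rule count_rep[OF S]) (use ab in auto)
  have rb: "(\<Sum>j<m. f (b j)) = (\<Sum>u\<in>S. cb u * f u)" for f :: "_ \<Rightarrow> real"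
    unfolding cb_def by (rule count_rep[OF S]) (use ab in auto)
  have "sum (\<lambda>u. ca u - cb u) S = 0"
    using ra[of "\<lambda>_. 1"] rb[of "\<lambda>_. 1"] by (simp add: sum_subtractf)
  then have "quad S (Dp p) (\<lambda>u. ca u - cb u) \<le> 0" using c unfolding cnd_def by blast
  then show "(\<Sum>k<m. \<Sum>l\<in>{k<..<m}. l1_dist (a k) (a l) powr p + l1_dist (b k) (b l) powr p)
          \<le> (\<Sum>j<m. \<Sum>i<m. l1_dist (a j) (b i) powr p)"
  proof -
    have sym: "\<And>u v. u \<in> S \<Longrightarrow> v \<in> S \<Longrightarrow> Dp p u v = Dp p v u" by (simp add: l1_sym)
    have diag: "\<And>u. u \<in> S \<Longrightarrow> Dp p u u = 0" by simp
    show ?thesis using gr_core[where D="Dp p", OF S sym diag ab ra rb] \<open>quad S (Dp p) (\<lambda>u. ca u - cb u) \<le> 0\<close>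
      by blast
  qed
qed

lemma sum_concat_rep:
  fixes f :: "'a \<Rightarrow> real"
  assumes "distinct xs"
  shows "sum_list (map f (concat (map (\<lambda>u. replicate (c u) u) xs))) = (\<Sum>u\<in>set xs. real (c u) * f u)"
  using assms by (induction xs) (auto simp: sum_list_replicate)

lemma gr_int:
  fixes S :: "(real ^ 'n) set"
  assumes S: "finite S" and gr: "gr_exponent l1_dist S p"
    and int: "\<forall>u\<in>S. \<eta> u \<in> \<int>" and s0: "sum \<eta> S = 0"
  shows "quad S (Dp p) \<eta> \<le> 0"
proof -
  obtain xs where xs: "set xs = S" "distinct xs" using finite_distinct_list[OF S] by blast
  define pc where "pc = (\<lambda>u. nat \<lfloor>\<eta> u\<rfloor>)"
  define nc where "nc = (\<lambda>u. nat \<lfloor>- \<eta> u\<rfloor>)"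
  define La where "La = concat (map (\<lambda>u. replicate (pc u) u) xs)"
  define Lb where "Lb = concat (map (\<lambda>u. replicate (nc u) u) xs)"
  have pn: "real (pc u) - real (nc u) = \<eta> u" if "u \<in> S" for u
  proof -
    have "\<eta> u \<in> \<int>" using int that by auto
    then obtain k where k: "\<eta> u = of_int k" by (rule Ints_cases)
    show ?thesis unfolding pc_def nc_def k by simp
  qed
  have repa: "sum_list (map f La) = (\<Sum>u\<in>S. real (pc u) * f u)" for f :: "_ \<Rightarrow> real"
    unfolding La_def using sum_concat_rep[OF xs(2)] xs(1) by simp
  have repb: "sum_list (map f Lb) = (\<Sum>u\<in>S. real (nc u) * f u)" for f :: "_ \<Rightarrow> real"
    unfolding Lb_def using sum_concat_rep[OF xs(2)] xs(1) by simp
  have "real (length La) = real (length Lb)"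
  proof -
    have "real (length La) = (\<Sum>u\<in>S. real (pc u))" using repa[of "\<lambda>_. 1"] by (simp add: sum_list_triv)
    moreover have "real (length Lb) = (\<Sum>u\<in>S. real (nc u))" using repb[of "\<lambda>_. 1"] by (simp add: sum_list_triv)
    moreover have "(\<Sum>u\<in>S. real (pc u)) - (\<Sum>u\<in>S. real (nc u)) = 0"
      using pn s0 by (simp add: sum_subtractf[symmetric])
    ultimately show ?thesis by simp
  qed
  then have len: "length Lb = length La" by simp
  define m where "m = length La"
  define a where "a = (\<lambda>j. La ! j)"
  define b where "b = (\<lambda>j. Lb ! j)"
  have sa: "(\<Sum>j<m. f (a j)) = (\<Sum>u\<in>S. real (pc u) * f u)" for f :: "_ \<Rightarrow> real"
    unfolding m_def a_def repa[symmetric] sum_list_sum_nth by (simp add: atLeast0LessThan)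
  have sb: "(\<Sum>j<m. f (b j)) = (\<Sum>u\<in>S. real (nc u) * f u)" for f :: "_ \<Rightarrow> real"
    unfolding m_def b_def repb[symmetric] sum_list_sum_nth len[symmetric] by (simp add: atLeast0LessThan)
  have ab: "\<forall>i<m. a i \<in> S \<and> b i \<in> S"
  proof (intro allI impI conjI)
    fix i assume "i < m"
    then have "La ! i \<in> set La" "Lb ! i \<in> set Lb" using len m_def by auto
    then show "a i \<in> S" "b i \<in> S" unfolding a_def b_def La_def Lb_def using xs(1) by auto
  qed
  have "(\<Sum>k<m. \<Sum>l\<in>{k<..<m}. l1_dist (a k) (a l) powr p + l1_dist (b k) (b l) powr p)
          \<le> (\<Sum>j<m. \<Sum>i<m. l1_dist (a j) (b i) powr p)"
    using gr ab unfolding gr_exponent_def by blast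
  then have "quad S (Dp p) (\<lambda>u. real (pc u) - real (nc u)) \<le> 0"
  proof -
    have sym: "\<And>u v. u \<in> S \<Longrightarrow> v \<in> S \<Longrightarrow> Dp p u v = Dp p v u" by (simp add: l1_sym)
    have diag: "\<And>u. u \<in> S \<Longrightarrow> Dp p u u = 0" by simp
    show ?thesis using gr_core[where D="Dp p", OF S sym diag ab sa sb] \<open>(\<Sum>k<m. \<Sum>l\<in>{k<..<m}. l1_dist (a k) (a l) powr p + l1_dist (b k) (b l) powr p)
          \<le> (\<Sum>j<m. \<Sum>i<m. l1_dist (a j) (b i) powr p)\<close>
      by blast
  qed
  moreover have "quad S (Dp p) (\<lambda>u. real (pc u) - real (nc u)) = quad S (Dp p) \<eta>"
    by (rule quad_cong) (auto simp: pn)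
  ultimately show ?thesis by simp
qed

lemma quad_scale: "quad F K (\<lambda>u. c * \<xi> u) = c * c * quad F K \<xi>"
  unfolding quad_def by (simp add: sum_distrib_left mult_ac)

lemma floor_lim: "(\<lambda>N. real_of_int \<lfloor>real N * x\<rfloor> / real N) \<longlonglongrightarrow> x"
proof (rule tendsto_sandwich[of "\<lambda>N. x - 1 / real N" _ _ "\<lambda>_. x"])
  show "\<forall>\<^sub>F N in sequentially. x - 1 / real N \<le> real_of_int \<lfloor>real N * x\<rfloor> / real N"
    using eventually_gt_at_top[of "0::nat"]
  proof eventually_elim
    case (elim N)
    then have "real N * x - 1 \<le> real_of_int \<lfloor>real N * x\<rfloor>" by linarith
    then have "(real N * x - 1) / real N \<le> real_of_int \<lfloor>real N * x\<rfloor> / real N"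
      by (rule divide_right_mono) simp
    moreover have "(real N * x - 1) / real N = x - 1 / real N" using elim by (simp add: field_simps)
    ultimately show ?case by simp
  qed
  show "\<forall>\<^sub>F N in sequentially. real_of_int \<lfloor>real N * x\<rfloor> / real N \<le> x"
    using eventually_gt_at_top[of "0::nat"]
  proof eventually_elim
    case (elim N)
    then show ?case by (simp add: field_simps)
  qed
  show "(\<lambda>N. x - 1 / real N) \<longlonglongrightarrow> x"
    using tendsto_diff[OF tendsto_const lim_1_over_n, of x] by simp
qed simp

lemma gr_cnd:
  fixes S :: "(real ^ 'n) set"
  assumes S: "finite S" and gr: "gr_exponent l1_dist S p"
  shows "cnd S (Dp p)"
  unfolding cnd_def
proof (intro allI impI)
  fix \<eta> :: "real ^ 'n \<Rightarrow> real"
  assume s0: "sum \<eta> S = 0"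
  show "quad S (Dp p) \<eta> \<le> 0"
  proof (cases "S = {}")
    case True then show ?thesis by (simp add: quad_def)
  next
    case False
    then obtain u0 where u0: "u0 \<in> S" by blast
    define e where "e = (\<lambda>(N::nat) u. if u = u0 then - (\<Sum>v\<in>S-{u0}. real_of_int \<lfloor>real N * \<eta> v\<rfloor>)
                                       else real_of_int \<lfloor>real N * \<eta> u\<rfloor>)"
    have le: "quad S (Dp p) (\<lambda>u. e N u / real N) \<le> 0" for N
    proof -
      have "\<forall>u\<in>S. e N u \<in> \<int>" unfolding e_def by auto
      moreover have "sum (e N) S = 0"
      proof -
        have "sum (e N) S = e N u0 + sum (e N) (S - {u0})" using S u0 by (simp add: sum.remove)
        also have "sum (e N) (S - {u0}) = (\<Sum>v\<in>S-{u0}. real_of_int \<lfloor>real N * \<eta> v\<rfloor>)"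
          by (intro sum.cong refl) (auto simp: e_def)
        finally show ?thesis by (simp add: e_def)
      qed
      ultimately have "quad S (Dp p) (e N) \<le> 0" by (rule gr_int[OF S gr])
      moreover have "quad S (Dp p) (\<lambda>u. e N u / real N) = (1 / real N) * (1 / real N) * quad S (Dp p) (e N)"
        using quad_scale[of S "Dp p" "1 / real N" "e N"] by simp
      ultimately show ?thesis by (simp add: divide_nonpos_nonneg)
    qed
    have lim_e: "(\<lambda>N. e N u / real N) \<longlonglongrightarrow> \<eta> u" if "u \<in> S" for u
    proof (cases "u = u0")
      case True
      have "(\<lambda>N. - (\<Sum>v\<in>S-{u0}. real_of_int \<lfloor>real N * \<eta> v\<rfloor> / real N)) \<longlonglongrightarrow> - (\<Sum>v\<in>S-{u0}. \<eta> v)"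
        by (intro tendsto_minus tendsto_sum floor_lim)
      moreover have "- (\<Sum>v\<in>S-{u0}. \<eta> v) = \<eta> u0"
        using s0 S u0 by (simp add: sum.remove)
      moreover have "e N u / real N = - (\<Sum>v\<in>S-{u0}. real_of_int \<lfloor>real N * \<eta> v\<rfloor> / real N)" for N
        using True by (simp add: e_def sum_divide_distrib)
      ultimately show ?thesis using True by simp
    next
      case False
      then show ?thesis using floor_lim[of "\<eta> u"] by (simp add: e_def)
    qed
    have "(\<lambda>N. quad S (Dp p) (\<lambda>u. e N u / real N)) \<longlonglongrightarrow> quad S (Dp p) \<eta>"
      unfolding quad_def by (intro tendsto_sum tendsto_mult tendsto_const lim_e)
    then show ?thesis using le by (intro LIMSEQ_le_const2) auto
  qed
qed



lemma indep_bound: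
  fixes S :: "(real ^ 'n) set"
  assumes S: "finite S" and ind: "\<not> affine_dependent S"
  shows "\<exists>C\<ge>0. \<forall>\<eta>. sum \<eta> S = 0 \<longrightarrow> (\<Sum>u\<in>S. \<bar>\<eta> u\<bar>) \<le> C * norm (\<Sum>u\<in>S. \<eta> u *\<^sub>R u)"
proof (cases "S = {}")
  case True then show ?thesis by auto
next
  case False
  then obtain u0 where u0: "u0 \<in> S" by blast
  define B where "B = (\<lambda>x. -u0 + x) ` (S - {u0})"
  have indB: "\<not> dependent B" using ind affine_dependent_iff_dependent2[OF u0] unfolding B_def by simp
  have "\<forall>b\<in>B. \<exists>g. linear g \<and> (\<forall>x\<in>B. g x = (if x = b then 1 else (0::real)))"
  proof
    fix b assume "b \<in> B"
    show "\<exists>g. linear g \<and> (\<forall>x\<in>B. g x = (if x = b then 1 else (0::real)))"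
      by (rule linear_independent_extend[OF indB])
  qed
  then obtain G where G: "\<And>b. b \<in> B \<Longrightarrow> linear (G b) \<and> (\<forall>x\<in>B. G b x = (if x = b then 1 else (0::real)))"
    by metis
  have "\<forall>b\<in>B. \<exists>M>0. \<forall>x. norm (G b x) \<le> M * norm x"
  proof
    fix b assume "b \<in> B"
    then have "linear (G b)" using G by blast
    then obtain M where "M > 0" "\<And>x. norm (G b x) \<le> M * norm x" using linear_bounded_pos by metis
    then show "\<exists>M>0. \<forall>x. norm (G b x) \<le> M * norm x" by blast
  qed
  then obtain M where M: "\<And>b. b \<in> B \<Longrightarrow> M b > 0 \<and> (\<forall>x. norm (G b x) \<le> M b * norm x)"
    by metis
  define Mx where "Mx = (\<Sum>b\<in>B. M b)"
  have finB: "finite B" using S unfolding B_def by simp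
  have MMx: "M b \<le> Mx" if "b \<in> B" for b
    unfolding Mx_def using finB that M by (intro member_le_sum) (auto intro: less_imp_le)
  have Mx0: "Mx \<ge> 0" unfolding Mx_def using M by (intro sum_nonneg) (auto intro: less_imp_le)
  define C where "C = 2 * real (card S) * Mx"
  show ?thesis
  proof (intro exI[of _ C] conjI allI impI)
    show "C \<ge> 0" unfolding C_def using Mx0 by simp
    fix \<eta> :: "real ^ 'n \<Rightarrow> real" assume s0: "sum \<eta> S = 0"
    define v where "v = (\<Sum>u\<in>S. \<eta> u *\<^sub>R u)"
    have v: "v = (\<Sum>u\<in>S-{u0}. \<eta> u *\<^sub>R (-u0 + u))"
    proof -
      have "(\<Sum>u\<in>S. \<eta> u *\<^sub>R (-u0 + u)) = v - (sum \<eta> S) *\<^sub>R u0"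
      proof -
        have "(\<Sum>u\<in>S. \<eta> u *\<^sub>R (-u0 + u)) = (\<Sum>u\<in>S. \<eta> u *\<^sub>R u - \<eta> u *\<^sub>R u0)"
          by (intro sum.cong refl) (simp add: algebra_simps)
        also have "\<dots> = v - (\<Sum>u\<in>S. \<eta> u *\<^sub>R u0)" unfolding v_def by (rule sum_subtractf)
        also have "(\<Sum>u\<in>S. \<eta> u *\<^sub>R u0) = (sum \<eta> S) *\<^sub>R u0" by (rule scaleR_sum_left[symmetric])
        finally show ?thesis .
      qed
      then have "(\<Sum>u\<in>S. \<eta> u *\<^sub>R (-u0 + u)) = v" using s0 by simp
      moreover have "(\<Sum>u\<in>S. \<eta> u *\<^sub>R (-u0 + u)) = (\<Sum>u\<in>S-{u0}. \<eta> u *\<^sub>R (-u0 + u))"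
        using S u0 by (simp add: sum.remove)
      ultimately show ?thesis by simp
    qed
    have each: "\<bar>\<eta> w\<bar> \<le> Mx * norm v" if w: "w \<in> S - {u0}" for w
    proof -
      define b where "b = -u0 + w"
      have bB: "b \<in> B" unfolding b_def B_def using w by auto
      have lin: "linear (G b)" using G[OF bB] by blast
      have "G b v = (\<Sum>u\<in>S-{u0}. \<eta> u * G b (-u0 + u))"
        unfolding v using lin by (simp add: linear_sum linear_cmul)
      also have "\<dots> = (\<Sum>u\<in>S-{u0}. if u = w then \<eta> u else 0)"
      proof (intro sum.cong refl)
        fix u assume u: "u \<in> S - {u0}"
        then have "-u0 + u \<in> B" unfolding B_def by auto
        then have "G b (-u0 + u) = (if -u0 + u = b then 1 else 0)" using G[OF bB] by blast
        then show "\<eta> u * G b (-u0 + u) = (if u = w then \<eta> u else 0)" by (auto simp: b_def)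
      qed
      also have "\<dots> = \<eta> w" using w S by (simp add: sum.delta')
      finally have "\<eta> w = G b v" by simp
      then have "\<bar>\<eta> w\<bar> \<le> M b * norm v" using M[OF bB] by (metis real_norm_def)
      also have "\<dots> \<le> Mx * norm v" using MMx[OF bB] by (simp add: mult_right_mono)
      finally show ?thesis .
    qed
    have rest: "(\<Sum>u\<in>S-{u0}. \<bar>\<eta> u\<bar>) \<le> real (card S) * Mx * norm v"
    proof -
      have "(\<Sum>u\<in>S-{u0}. \<bar>\<eta> u\<bar>) \<le> (\<Sum>u\<in>S-{u0}. Mx * norm v)" by (intro sum_mono each)
      also have "\<dots> = real (card (S - {u0})) * (Mx * norm v)" by simp
      also have "\<dots> \<le> real (card S) * (Mx * norm v)"
        using Mx0 S by (intro mult_right_mono) (auto simp: card_Diff_subset u0)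
      finally show ?thesis by (simp add: mult_ac)
    qed
    have e0: "\<bar>\<eta> u0\<bar> \<le> (\<Sum>u\<in>S-{u0}. \<bar>\<eta> u\<bar>)"
    proof -
      have "\<eta> u0 = - (\<Sum>u\<in>S-{u0}. \<eta> u)" using s0 S u0 by (simp add: sum.remove)
      then have "\<bar>\<eta> u0\<bar> = \<bar>\<Sum>u\<in>S-{u0}. \<eta> u\<bar>" by simp
      also have "\<dots> \<le> (\<Sum>u\<in>S-{u0}. \<bar>\<eta> u\<bar>)" by (rule sum_abs)
      finally show ?thesis .
    qed
    have "(\<Sum>u\<in>S. \<bar>\<eta> u\<bar>) = \<bar>\<eta> u0\<bar> + (\<Sum>u\<in>S-{u0}. \<bar>\<eta> u\<bar>)" using S u0 by (simp add: sum.remove)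
    also have "\<dots> \<le> C * norm v" unfolding C_def using e0 rest by linarith
    finally show "(\<Sum>u\<in>S. \<bar>\<eta> u\<bar>) \<le> C * norm (\<Sum>u\<in>S. \<eta> u *\<^sub>R u)" unfolding v_def .
  qed
qed



lemma powr_close:
  fixes S :: "(real ^ 'n) set"
  assumes S: "finite S" and e: "e > 0"
  shows "\<exists>p>1. \<forall>u\<in>S. \<forall>v\<in>S. \<bar>l1_dist u v powr p - l1_dist u v\<bar> \<le> e"
proof -
  have ev: "eventually (\<lambda>p. \<bar>l1_dist u v powr p - l1_dist u v\<bar> < e) (at_right 1)" for u v :: "real ^ 'n"
  proof (cases "l1_dist u v = 0")
    case True then show ?thesis using e by simp
  next
    case False
    have "((\<lambda>p. l1_dist u v powr p) \<longlongrightarrow> l1_dist u v powr 1) (at_right 1)"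
      using False by (intro tendsto_powr tendsto_const tendsto_ident_at) 
    moreover have "l1_dist u v powr 1 = l1_dist u v" using l1_nonneg[of u v] by simp
    ultimately have "((\<lambda>p. l1_dist u v powr p) \<longlongrightarrow> l1_dist u v) (at_right 1)" by simp
    then show ?thesis using e unfolding tendsto_iff dist_real_def by blast
  qed
  have "eventually (\<lambda>p. \<forall>u\<in>S. \<forall>v\<in>S. \<bar>l1_dist u v powr p - l1_dist u v\<bar> < e) (at_right 1)"
    using S ev by (intro eventually_ball_finite ballI) auto
  then obtain b where b: "b > 1" "\<And>y. y > 1 \<Longrightarrow> y < b \<Longrightarrow> \<forall>u\<in>S. \<forall>v\<in>S. \<bar>l1_dist u v powr y - l1_dist u v\<bar> < e"
    unfolding eventually_at_right_field by blast
  have "(1 + b) / 2 > 1" "(1 + b) / 2 < b" using b(1) by auto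
  from b(2)[OF this] this(1) show ?thesis by (intro exI[of _ "(1 + b) / 2"]) (auto intro: less_imp_le)
qed

lemma indep_cnd:
  fixes S :: "(real ^ 'n) set"
  assumes S: "finite S" and cube: "S \<subseteq> hamming_cube" and ind: "\<not> affine_dependent S"
  shows "\<exists>p>1. cnd S (Dp p)"
proof -
  obtain C where C: "C \<ge> 0" "\<And>\<eta>. sum \<eta> S = 0 \<Longrightarrow> (\<Sum>u\<in>S. \<bar>\<eta> u\<bar>) \<le> C * norm (\<Sum>u\<in>S. \<eta> u *\<^sub>R u)"
    using indep_bound[OF S ind] by blast
  define e where "e = 1 / (C * C + 1)"
  have e0: "e > 0" unfolding e_def by (simp add: add_nonneg_pos)
  have eC: "e * (C * C) \<le> 2"
  proof -
    have "e * (C * C) = (C * C) / (C * C + 1)" unfolding e_def by simp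
    also have "\<dots> \<le> 1" by (simp add: add_nonneg_pos)
    finally show ?thesis by simp
  qed
  obtain p where p: "p > 1" "\<And>u v. u \<in> S \<Longrightarrow> v \<in> S \<Longrightarrow> \<bar>l1_dist u v powr p - l1_dist u v\<bar> \<le> e"
    using powr_close[OF S e0] by blast
  have "cnd S (Dp p)"
    unfolding cnd_def
  proof (intro allI impI)
    fix \<eta> :: "real ^ 'n \<Rightarrow> real" assume s0: "sum \<eta> S = 0"
    define w where "w = (\<Sum>u\<in>S. \<eta> u *\<^sub>R u)"
    define T where "T = (\<Sum>u\<in>S. \<bar>\<eta> u\<bar>)"
    have T0: "T \<ge> 0" unfolding T_def by (simp add: sum_nonneg)
    have q1: "quad S (Dp 1) \<eta> = -2 * (norm w)^2"
      using cube_quad1[OF cube S s0] unfolding w_def power2_norm_eq_inner by simp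
    have d1: "l1_dist u v powr 1 = l1_dist u v" for u v using l1_nonneg[of u v] by simp
    have split: "quad S (Dp p) \<eta> = quad S (Dp 1) \<eta> + quad S (\<lambda>u v. l1_dist u v powr p - l1_dist u v) \<eta>"
      unfolding quad_def d1 by (simp add: sum.distrib[symmetric] algebra_simps)
    have "quad S (\<lambda>u v. l1_dist u v powr p - l1_dist u v) \<eta> \<le> (\<Sum>u\<in>S. \<Sum>v\<in>S. e * (\<bar>\<eta> u\<bar> * \<bar>\<eta> v\<bar>))"
      unfolding quad_def
    proof (intro sum_mono)
      fix u v assume uv: "u \<in> S" "v \<in> S"
      have "\<eta> u * \<eta> v * (l1_dist u v powr p - l1_dist u v) \<le> \<bar>\<eta> u * \<eta> v * (l1_dist u v powr p - l1_dist u v)\<bar>"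
        by simp
      also have "\<dots> = (\<bar>\<eta> u\<bar> * \<bar>\<eta> v\<bar>) * \<bar>l1_dist u v powr p - l1_dist u v\<bar>" by (simp add: abs_mult)
      also have "\<dots> \<le> (\<bar>\<eta> u\<bar> * \<bar>\<eta> v\<bar>) * e" using p(2)[OF uv] by (intro mult_left_mono) auto
      finally show "\<eta> u * \<eta> v * (l1_dist u v powr p - l1_dist u v) \<le> e * (\<bar>\<eta> u\<bar> * \<bar>\<eta> v\<bar>)"
        by (simp add: mult_ac)
    qed
    also have "\<dots> = e * (T * T)" by (simp add: T_def sum_distrib_left sum_distrib_right mult_ac)
    also have "\<dots> \<le> e * ((C * norm w) * (C * norm w))"
      using C(2)[OF s0] T0 e0 unfolding T_def[symmetric] w_def[symmetric]
      by (intro mult_left_mono mult_mono) auto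
    also have "\<dots> = (e * (C * C)) * (norm w)^2" by (simp add: power2_eq_square mult_ac)
    also have "\<dots> \<le> 2 * (norm w)^2" using eC by (intro mult_right_mono) auto
    finally show "quad S (Dp p) \<eta> \<le> 0" using split q1 by linarith
  qed
  then show ?thesis using p(1) by blast
qed



lemma strict_iff:
  fixes S :: "(real ^ 'n) set"
  assumes S: "finite S" and cube: "S \<subseteq> hamming_cube"
  shows "strict_neg_type l1_dist S 1 \<longleftrightarrow> \<not> affine_dependent S"
proof
  assume st: "strict_neg_type l1_dist S 1"
  show "\<not> affine_dependent S"
  proof
    assume "affine_dependent S"
    then obtain U where U: "sum U S = 0" "\<exists>v\<in>S. U v \<noteq> 0" "(\<Sum>v\<in>S. U v *\<^sub>R v) = 0"
      using affine_dependent_explicit_finite[OF S] by blast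
    obtain v where v: "v \<in> S" "U v \<noteq> 0" using U(2) by blast
    have "card S \<ge> 2"
    proof (rule ccontr)
      assume "\<not> card S \<ge> 2"
      then have "card S \<le> 1" by simp
      then have "S = {v}" using v(1) S card_le_Suc0_iff_eq[OF S] by auto
      then show False using U(1) v(2) by simp
    qed
    moreover have "\<forall>F (\<eta>::real ^ 'n \<Rightarrow> real). F \<subseteq> S \<longrightarrow> finite F \<longrightarrow> card F \<ge> 2 \<longrightarrow> sum \<eta> F = 0 \<longrightarrow>
        (\<exists>x\<in>F. \<eta> x \<noteq> 0) \<longrightarrow> (\<Sum>x\<in>F. \<Sum>y\<in>F. l1_dist x y powr 1 * \<eta> x * \<eta> y) < 0"
      using st unfolding strict_neg_type_def by (rule conjunct2)
    ultimately have "(\<Sum>x\<in>S. \<Sum>y\<in>S. l1_dist x y powr 1 * U x * U y) < 0"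
      using S U(1) U(2) by simp
    moreover have "(\<Sum>x\<in>S. \<Sum>y\<in>S. l1_dist x y powr 1 * U x * U y) = 0"
      unfolding sum_form cube_quad1[OF cube S U(1)] U(3) by simp
    ultimately show False by simp
  qed
next
  assume ind: "\<not> affine_dependent S"
  have q: "(\<Sum>x\<in>F. \<Sum>y\<in>F. l1_dist x y powr 1 * \<eta> x * \<eta> y) = -2 * ((\<Sum>u\<in>F. \<eta> u *\<^sub>R u) \<bullet> (\<Sum>u\<in>F. \<eta> u *\<^sub>R u))"
    if "F \<subseteq> S" "finite F" "sum \<eta> F = 0" for F and \<eta> :: "real ^ 'n \<Rightarrow> real"
    unfolding sum_form using cube_quad1[of F \<eta>] that cube by blast
  show "strict_neg_type l1_dist S 1"
    unfolding strict_neg_type_def neg_type_def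
  proof (intro conjI allI impI)
    fix F and \<eta> :: "real ^ 'n \<Rightarrow> real" assume F: "F \<subseteq> S" "finite F" "card F \<ge> 2" "sum \<eta> F = 0"
    show "(\<Sum>x\<in>F. \<Sum>y\<in>F. l1_dist x y powr 1 * \<eta> x * \<eta> y) \<le> 0"
      unfolding q[OF F(1,2,4)] by simp
  next
    fix F and \<eta> :: "real ^ 'n \<Rightarrow> real" assume F: "F \<subseteq> S" "finite F" "card F \<ge> 2" "sum \<eta> F = 0" and nz: "\<exists>x\<in>F. \<eta> x \<noteq> 0"
    have "(\<Sum>u\<in>F. \<eta> u *\<^sub>R u) \<noteq> 0"
    proof
      assume "(\<Sum>u\<in>F. \<eta> u *\<^sub>R u) = 0"
      then have "affine_dependent F" using affine_dependent_explicit_finite[OF F(2)] F(4) nz by blast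
      then show False using affine_dependent_subset[OF _ F(1)] ind by blast
    qed
    then show "(\<Sum>x\<in>F. \<Sum>y\<in>F. l1_dist x y powr 1 * \<eta> x * \<eta> y) < 0"
      unfolding q[OF F(1,2,4)] by simp
  qed simp
qed

lemma one_exp:
  fixes S :: "(real ^ 'n) set"
  assumes S: "finite S" and cube: "S \<subseteq> hamming_cube"
  shows "gr_exponent l1_dist S 1"
proof (rule cnd_gr[OF S])
  show "cnd S (Dp 1)" unfolding cnd_def
    using cube_quad1[OF cube S] by simp
qed simp

lemma no_big_exp:
  fixes S :: "(real ^ 'n) set"
  assumes S: "finite S" and cube: "S \<subseteq> hamming_cube" and dep: "affine_dependent S" and gr: "gr_exponent l1_dist S p"
  shows "p \<le> 1"
proof (rule ccontr)
  assume "\<not> p \<le> 1"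
  then have p: "p > 1" by simp
  obtain U where U: "sum U S = 0" "\<exists>v\<in>S. U v \<noteq> 0" "(\<Sum>v\<in>S. U v *\<^sub>R v) = 0"
    using affine_dependent_explicit_finite[OF S] dep by blast
  have c: "cnd S (Dp p)" by (rule gr_cnd[OF S gr])
  have lt: "quad S (\<lambda>u v. Dp p u v powr (1/p)) U < 0"
  proof (rule cnd_strict[OF S c])
    show "l1_dist u v powr p = l1_dist v u powr p" for u v by (simp add: l1_sym)
    show "l1_dist u u powr p = 0" for u by simp
    show "0 < l1_dist u v powr p" if "u \<noteq> v" for u v using l1_pos[OF that] by simp
    show "0 < 1 / p" "1 / p < 1" using p by auto
  qed (use U in auto)
  have eq: "(\<lambda>u v. Dp p u v powr (1/p)) = Dp 1"
    using p by (simp add: powr_powr)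
  have "quad S (Dp 1) U < 0" using lt unfolding eq .
  moreover have "quad S (Dp 1) U = 0"
    unfolding cube_quad1[OF cube S U(1)] U(3) by simp
  ultimately show False by simp
qed

theorem theorem4p3:
  fixes x :: "nat \<Rightarrow> real ^ 'n" and k :: nat
  assumes "inj_on x {0..k}"
    and "\<forall>i\<le>k. x i \<in> hamming_cube"
  shows "(gen_roundness l1_dist (x ` {0..k}) = 1 \<longleftrightarrow>
           dependent ((\<lambda>i. x i - x 0) ` {1..k}))
       \<and> (strict_neg_type l1_dist (x ` {0..k}) 1 \<longleftrightarrow>
           \<not> dependent ((\<lambda>i. x i - x 0) ` {1..k}))"
proof -
  define S where "S = x ` {0..k}"
  have S: "finite S" unfolding S_def by simp
  have cube: "S \<subseteq> hamming_cube" unfolding S_def using assms(2) by auto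
  have x0: "x 0 \<in> S" unfolding S_def by simp
  have SD: "S - {x 0} = x ` {1..k}"
  proof
    show "S - {x 0} \<subseteq> x ` {1..k}"
    proof
      fix y assume "y \<in> S - {x 0}"
      then obtain i where i: "i \<in> {0..k}" "y = x i" "y \<noteq> x 0" unfolding S_def by auto
      have "i \<noteq> 0" using i(2,3) by (cases "i = 0") auto
      then have "i \<in> {1..k}" using i(1) by auto
      then show "y \<in> x ` {1..k}" using i by auto
    qed
    show "x ` {1..k} \<subseteq> S - {x 0}"
    proof
      fix y assume "y \<in> x ` {1..k}"
      then obtain i where i: "i \<in> {1..k}" "y = x i" by auto
      have "x i \<noteq> x 0"
      proof
        assume "x i = x 0"
        then have "i = 0" using assms(1) i(1) unfolding inj_on_def by (metis atLeastAtMost_iff le0 order_trans atLeastAtMost_iff)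
        then show False using i(1) by simp
      qed
      then show "y \<in> S - {x 0}" using i unfolding S_def by auto
    qed
  qed
  have dep: "dependent ((\<lambda>i. x i - x 0) ` {1..k}) \<longleftrightarrow> affine_dependent S"
  proof -
    have "(\<lambda>y. - x 0 + y) ` (S - {x 0}) = (\<lambda>i. x i - x 0) ` {1..k}"
      unfolding SD image_image by simp
    then show ?thesis using affine_dependent_iff_dependent2[OF x0] by simp
  qed
  define E where "E = {p. gr_exponent l1_dist S p}"
  have one: "1 \<in> E" unfolding E_def using one_exp[OF S cube] by simp
  have gr: "gen_roundness l1_dist S = 1 \<longleftrightarrow> affine_dependent S"
  proof
    assume g: "gen_roundness l1_dist S = 1"
    show "affine_dependent S"
    proof (rule ccontr)
      assume "\<not> affine_dependent S"
      then obtain p where p: "p > 1" "cnd S (Dp p)" using indep_cnd[OF S cube] by blast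
      then have "gr_exponent l1_dist S p" using cnd_gr[OF S] by simp
      then have "ereal p \<le> gen_roundness l1_dist S"
        unfolding gen_roundness_def by (intro Sup_upper) auto
      then show False using g p(1) by simp
    qed
  next
    assume d: "affine_dependent S"
    have "Sup (ereal ` E) = 1"
    proof (rule antisym)
      show "Sup (ereal ` E) \<le> 1"
        using no_big_exp[OF S cube d] by (intro Sup_least) (auto simp: E_def)
      show "1 \<le> Sup (ereal ` E)"
        using one by (metis Sup_upper image_eqI one_ereal_def)
    qed
    then show "gen_roundness l1_dist S = 1" unfolding gen_roundness_def E_def .
  qed
  show ?thesis
    unfolding S_def[symmetric] dep gr strict_iff[OF S cube] by simp
qed

end
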